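(* Let $\mathsf{P}:\mathcal{B}(\mathbb{C})\to\mathcal{L}(\mathcal{H})$ be a phase shift covariant phase space observable whose angle margin is the canonical phase, i.e.\ $\mathsf{P}(\mathbb{R}_+\times\Theta)=\mathsf{E}_{\mathrm{can}}(\Theta)$ for all $\Theta\in\mathcal{B}([0,2\pi))$. Then its radial margin is trivial: there is a probability measure $\nu$ on $\mathbb{R}_+$ with $\mathsf{P}(X\times[0,2\pi))=\nu(X)I$ for all $X\in\mathcal{B}(\mathbb{R}_+)$.
   Context: $\mathcal{H}\simeq L^2(\mathbb{R})$ with number basis $\{|n\rangle\}$ and number operator $N$. $\mathbb{C}\simeq\mathbb{R}_+\times[0,2\pi)$ via polar coordinates, $X\times\Theta=\{re^{i\theta}:r\in X,\theta\in\Theta\}$; $\dot{+}$ is addition modulo $2\pi$. A phase shift covariant phase space observable is a POVM $\mathsf{P}$ on $\mathcal{B}(\mathbb{C})$ with $e^{i\theta N}\mathsf{P}(X\times\Theta)e^{-i\theta N}=\mathsf{P}(X\times(\Theta\dot{+}\theta))$ for all $X,\Theta,\theta$. The canonical phase is $\mathsf{E}_{\mathrm{can}}(\Theta)=\sum_{m,n=0}^\infty\frac{1}{2\pi}\int_\Theta e^{i(m-n)\theta}d\theta\,|m\rangle\langle n|$. *)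

theory Defs
  imports "HOL-Probability.Probability"
begin

text \<open>Operators on H = L2(R) are represented by their matrix elements
  in the number basis: an operator T is given by (\<lambda>m n. <m|T|n>).
  A POVM on the Borel sets of C is thus a map P :: complex set => nat => nat => complex,
  P A m n = <m|P(A)|n>.\<close>

definition mod2pi :: "real \<Rightarrow> real" where
  "mod2pi t = t - 2 * pi * of_int \<lfloor>t / (2 * pi)\<rfloor>"

definition shift2pi :: "real set \<Rightarrow> real \<Rightarrow> real set" where
  "shift2pi \<Theta> \<theta> = (\<lambda>t. mod2pi (t + \<theta>)) ` \<Theta>"

definition polar_set :: "real set \<Rightarrow> real set \<Rightarrow> complex set" where
  "polar_set X \<Theta> = {complex_of_real r * cis t | r t. r \<in> X \<and> t \<in> \<Theta>}"

text \<open>P is a POVM on B(C): each P(A) (A Borel) is a positive operator (its quadratic form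
  on finitely supported vectors is real and nonnegative), P(C) = I, and P is
  weakly sigma-additive. (Positivity together with normalization forces 0 <= P(A) <= I,
  so each P(A) is a bounded operator determined by these matrix elements.)\<close>
definition is_povm :: "(complex set \<Rightarrow> nat \<Rightarrow> nat \<Rightarrow> complex) \<Rightarrow> bool" where
  "is_povm P \<longleftrightarrow>
     (\<forall>A \<in> sets borel. \<forall>c :: nat \<Rightarrow> complex. \<forall>S. finite S \<longrightarrow>
        Im (\<Sum>i\<in>S. \<Sum>j\<in>S. cnj (c i) * c j * P A i j) = 0 \<and>
        Re (\<Sum>i\<in>S. \<Sum>j\<in>S. cnj (c i) * c j * P A i j) \<ge> 0)
   \<and> (\<forall>m n. P UNIV m n = (if m = n then 1 else 0))
   \<and> (\<forall>A :: nat \<Rightarrow> complex set. range A \<subseteq> sets borel \<longrightarrow> disjoint_family A \<longrightarrow>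
        (\<forall>m n. (\<lambda>k. P (A k) m n) sums P (\<Union>k. A k) m n))"

text \<open>Phase shift covariance: e^{i theta N} P(X x Theta) e^{-i theta N} = P(X x (Theta +. theta)),
  in matrix elements: e^{i(m-n)theta} <m|P(X x Theta)|n> = <m|P(X x (Theta +. theta))|n>.\<close>
definition phase_covariant :: "(complex set \<Rightarrow> nat \<Rightarrow> nat \<Rightarrow> complex) \<Rightarrow> bool" where
  "phase_covariant P \<longleftrightarrow>
     (\<forall>X \<Theta> \<theta>. X \<in> sets borel \<longrightarrow> X \<subseteq> {0..} \<longrightarrow> \<Theta> \<in> sets borel \<longrightarrow> \<Theta> \<subseteq> {0..<2*pi} \<longrightarrow>
        (\<forall>m n. cis ((real m - real n) * \<theta>) * P (polar_set X \<Theta>) m n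
               = P (polar_set X (shift2pi \<Theta> \<theta>)) m n))"

definition E_can :: "real set \<Rightarrow> nat \<Rightarrow> nat \<Rightarrow> complex" where
  "E_can \<Theta> m n = (1 / (2 * pi)) * (LINT t:\<Theta>|lborel. cis ((real m - real n) * t))"

end

theory Submission imports Defs begin

lemma mod2pi_id: "0 \<le> t \<Longrightarrow> t < 2*pi \<Longrightarrow> mod2pi t = t"
proof -
  assume a: "0 \<le> t" "t < 2*pi"
  have "\<lfloor>t / (2*pi)\<rfloor> = 0" using a pi_gt_zero by (simp add: floor_eq_iff field_simps)
  then show ?thesis by (simp add: mod2pi_def)
qed

lemma mod2pi_range: "0 \<le> mod2pi t \<and> mod2pi t < 2*pi"
proof -
  have p: "2*pi > 0" using pi_gt_zero by simp
  have "of_int \<lfloor>t / (2*pi)\<rfloor> * (2*pi) \<le> t" "t < (of_int \<lfloor>t / (2*pi)\<rfloor> + 1) * (2*pi)"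
    using floor_divide_lower[OF p] floor_divide_upper[OF p] by auto
  then show ?thesis unfolding mod2pi_def by (auto simp: algebra_simps)
qed

lemma mod2pi_shift: "mod2pi (t + 2*pi * of_int j) = mod2pi t"
proof -
  have "(t + 2*pi * of_int j) / (2*pi) = t/(2*pi) + of_int j" using pi_gt_zero by (simp add: field_simps)
  then have "\<lfloor>(t + 2*pi * of_int j) / (2*pi)\<rfloor> = \<lfloor>t/(2*pi)\<rfloor> + j" by simp
  then show ?thesis unfolding mod2pi_def by (simp add: algebra_simps)
qed

lemma shift2pi_full: "shift2pi {0..<2*pi} \<theta> = {0..<2*pi}"
proof
  show "shift2pi {0..<2*pi} \<theta> \<subseteq> {0..<2*pi}" unfolding shift2pi_def using mod2pi_range by auto
  show "{0..<2*pi} \<subseteq> shift2pi {0..<2*pi} \<theta>"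
  proof
    fix s assume s: "s \<in> {0..<2*pi::real}"
    define t where "t = mod2pi (s - \<theta>)"
    have "t + \<theta> = s + 2*pi * of_int (- \<lfloor>(s - \<theta>) / (2*pi)\<rfloor>)" unfolding t_def mod2pi_def by simp
    then have "mod2pi (t + \<theta>) = mod2pi s" using mod2pi_shift[of s "- \<lfloor>(s - \<theta>) / (2*pi)\<rfloor>"] by simp
    then have "mod2pi (t + \<theta>) = s" using mod2pi_id s by auto
    moreover have "t \<in> {0..<2*pi}" using mod2pi_range t_def by auto
    ultimately show "s \<in> shift2pi {0..<2*pi} \<theta>" unfolding shift2pi_def by force
  qed
qed

lemma shift2pi_arc: "0 \<le> a \<Longrightarrow> 0 \<le> \<theta> \<Longrightarrow> b + \<theta> \<le> 2*pi \<Longrightarrow> shift2pi {a..<b} \<theta> = {a+\<theta>..<b+\<theta>}"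
proof -
  assume h: "0 \<le> a" "0 \<le> \<theta>" "b + \<theta> \<le> 2*pi"
  have "shift2pi {a..<b} \<theta> = (\<lambda>t. t + \<theta>) ` {a..<b}"
    unfolding shift2pi_def by (rule image_cong) (use h mod2pi_id in auto)
  also have "\<dots> = {a+\<theta>..<b+\<theta>}" by simp
  finally show ?thesis .
qed

lemma polar_char:
  assumes "X \<subseteq> {0..}" "\<Theta> \<subseteq> {0..<2*pi}" "\<Theta> \<noteq> {}"
  shows "polar_set X \<Theta> = {z. cmod z \<in> X \<and> (z = 0 \<or> Arg2pi z \<in> \<Theta>)}"
proof (intro set_eqI iffI)
  fix z assume "z \<in> polar_set X \<Theta>"
  then obtain r t where z: "z = complex_of_real r * cis t" "r \<in> X" "t \<in> \<Theta>" unfolding polar_set_def by auto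
  have r0: "r \<ge> 0" using z assms by auto
  have "cmod z = r" using z r0 by (simp add: norm_mult)
  moreover have "z \<noteq> 0 \<Longrightarrow> Arg2pi z = t"
    using z r0 assms by (intro Arg2pi_unique[of r]) (auto simp: cis_conv_exp)
  ultimately show "z \<in> {z. cmod z \<in> X \<and> (z = 0 \<or> Arg2pi z \<in> \<Theta>)}" using z by (cases "r = 0") auto
next
  fix z assume z: "z \<in> {z. cmod z \<in> X \<and> (z = 0 \<or> Arg2pi z \<in> \<Theta>)}"
  show "z \<in> polar_set X \<Theta>"
  proof (cases "z = 0")
    case True
    then obtain t where "t \<in> \<Theta>" using assms by auto
    then show ?thesis using z True unfolding polar_set_def by force
  next
    case False
    have "z = complex_of_real (cmod z) * cis (Arg2pi z)"
      using cos_Arg2pi[of z] sin_Arg2pi[of z] by (intro complex_eqI) (auto simp: cis.sel)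
    then show ?thesis using z False unfolding polar_set_def by blast
  qed
qed

lemma Arg2pi_meas: "Arg2pi \<in> borel_measurable borel"
  unfolding borel_measurable_iff_le using closed_Arg2pi2pi_le by auto

lemma polar_borel:
  assumes "X \<in> sets borel" "X \<subseteq> {0..}" "\<Theta> \<in> sets borel" "\<Theta> \<subseteq> {0..<2*pi}"
  shows "polar_set X \<Theta> \<in> sets borel"
proof (cases "\<Theta> = {}")
  case True then show ?thesis by (simp add: polar_set_def)
next
  case False
  have e: "polar_set X \<Theta> = (cmod -` X) \<inter> ({0} \<union> Arg2pi -` \<Theta>)"
    using polar_char[OF assms(2,4) False] by auto
  have "cmod -` X \<in> sets borel" using assms(1)
    by (metis borel_measurable_norm measurable_ident_sets measurable_sets space_borel vimage_Int Int_UNIV_right)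
  moreover have "Arg2pi -` \<Theta> \<in> sets borel" using Arg2pi_meas assms(3)
    by (metis measurable_sets space_borel Int_UNIV_right)
  ultimately show ?thesis unfolding e by auto
qed


lemma povm_sums: "is_povm P \<Longrightarrow> range A \<subseteq> sets borel \<Longrightarrow> disjoint_family A \<Longrightarrow> (\<lambda>k. P (A k) m n) sums P (\<Union>k. A k) m n"
  unfolding is_povm_def by blast

lemma povm_posD: "is_povm P \<Longrightarrow> A \<in> sets borel \<Longrightarrow> finite S \<Longrightarrow>
   Im (\<Sum>i\<in>S. \<Sum>j\<in>S. cnj (c i) * c j * P A i j) = 0 \<and>
        Re (\<Sum>i\<in>S. \<Sum>j\<in>S. cnj (c i) * c j * P A i j) \<ge> 0"
  unfolding is_povm_def by blast

lemma povm_empty: assumes "is_povm P" shows "P {} m n = 0"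
proof -
  have "(\<lambda>k. P ((\<lambda>_. {}) k) m n) sums P (\<Union>k. (\<lambda>_. {}) k) m n"
    using povm_sums[OF assms, of "\<lambda>_. {}"] by (auto simp: disjoint_family_on_def)
  then have "summable (\<lambda>_. P {} m n)" by (auto simp: sums_iff)
  then show ?thesis by (simp add: summable_const_iff)
qed

lemma povm_union: assumes "is_povm P" "A \<in> sets borel" "B \<in> sets borel" "A \<inter> B = {}"
  shows "P (A \<union> B) m n = P A m n + P B m n"
proof -
  have "(\<lambda>k. P (binaryset A B k) m n) sums P (\<Union>k. binaryset A B k) m n"
    by (rule povm_sums[OF assms(1)]) (use assms in \<open>auto simp: disjoint_family_on_def binaryset_def range_binaryset_eq\<close>)
  moreover have "(\<lambda>k. P (binaryset A B k) m n) sums (P A m n + P B m n)"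
    using binaryset_sums[of "\<lambda>X. P X m n"] povm_empty[OF assms(1)] by auto
  ultimately show ?thesis by (simp add: UN_binaryset_eq sums_unique2)
qed

lemma povm_finite: fixes N :: nat and A :: "nat \<Rightarrow> complex set" assumes "is_povm P" "\<And>j. j < N \<Longrightarrow> A j \<in> sets borel" "disjoint_family_on A {..<N}"
  shows "P (\<Union>j<N. A j) m n = (\<Sum>j<N. P (A j) m n)"
proof -
  define B where "B k = (if k < N then A k else {})" for k :: nat
  have "(\<lambda>k. P (B k) m n) sums P (\<Union>k. B k) m n"
    by (rule povm_sums[OF assms(1)]) (use assms in \<open>auto simp: B_def disjoint_family_on_def\<close>)
  moreover have "(\<lambda>k. P (B k) m n) sums (\<Sum>k\<in>{..<N}. P (B k) m n)"
    by (rule sums_finite) (auto simp: B_def povm_empty[OF assms(1)])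
  moreover have "(\<Union>k. B k) = (\<Union>j<N. A j)" by (auto simp: B_def split: if_splits)
  ultimately show ?thesis by (simp add: sums_unique2 B_def)
qed

lemma povm_pos2: assumes "is_povm P" "A \<in> sets borel" "m \<noteq> n"
  shows "0 \<le> u\<^sup>2 * Re (P A m m) + u * v * Re (P A m n + P A n m) + v\<^sup>2 * Re (P A n n)"
proof -
  define c where "c i = (if i = m then complex_of_real u else if i = n then complex_of_real v else 0)" for i
  have "Re (\<Sum>i\<in>{m,n}. \<Sum>j\<in>{m,n}. cnj (c i) * c j * P A i j) \<ge> 0"
    using povm_posD[OF assms(1,2), of "{m,n}" c] by simp
  then show ?thesis using assms(3) by (simp add: c_def power2_eq_square algebra_simps)
qed

lemma povm_diag: assumes "is_povm P" "A \<in> sets borel"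
  shows "Im (P A m m) = 0" "Re (P A m m) \<ge> 0"
proof -
  have "Im (\<Sum>i\<in>{m}. \<Sum>j\<in>{m}. cnj ((\<lambda>_. 1) i) * (\<lambda>_. 1) j * P A i j) = 0 \<and>
        Re (\<Sum>i\<in>{m}. \<Sum>j\<in>{m}. cnj ((\<lambda>_. 1) i) * (\<lambda>_. 1) j * P A i j) \<ge> 0"
    by (rule povm_posD[OF assms(1,2)]) simp
  then show "Im (P A m m) = 0" "Re (P A m m) \<ge> 0" by auto
qed


lemma cos_ge_quad: fixes x :: real assumes "x \<ge> 0" shows "cos x \<ge> 1 - x\<^sup>2/2"
proof -
  let ?f = "\<lambda>x. cos x - 1 + x\<^sup>2/2"
  have "\<And>u. \<lbrakk>0 \<le> u; u \<le> x\<rbrakk> \<Longrightarrow> (?f has_real_derivative (u - sin u)) (at u)"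
    by (auto intro!: derivative_eq_intros simp: power2_eq_square)
  moreover have "\<And>u. \<lbrakk>0 \<le> u; u \<le> x\<rbrakk> \<Longrightarrow> u - sin u \<ge> 0" using sin_x_le_x by auto
  ultimately have "?f x \<ge> ?f 0"
    by (intro DERIV_nonneg_imp_nondecreasing [OF assms]) blast
  then show ?thesis by simp
qed

lemma sin_ge_cubic: fixes x :: real assumes "x \<ge> 0" shows "sin x \<ge> x - x^3/6"
proof -
  let ?f = "\<lambda>x. sin x - x + x^3/6"
  have "\<And>u. \<lbrakk>0 \<le> u; u \<le> x\<rbrakk> \<Longrightarrow> (?f has_real_derivative (cos u - 1 + u\<^sup>2/2)) (at u)"
    by (auto intro!: derivative_eq_intros simp: power2_eq_square)
  moreover have "\<And>u. \<lbrakk>0 \<le> u; u \<le> x\<rbrakk> \<Longrightarrow> cos u - 1 + u\<^sup>2/2 \<ge> 0" using cos_ge_quad by force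
  ultimately have "?f x \<ge> ?f 0"
    by (intro DERIV_nonneg_imp_nondecreasing [OF assms]) blast
  then show ?thesis by simp
qed

lemma Ecan_diag: assumes "\<epsilon> > 0" shows "E_can {0..<\<epsilon>} m m = complex_of_real (\<epsilon> / (2*pi))"
proof -
  have "(LINT t:{0..<\<epsilon>}|lborel. cis ((real m - real m) * t)) = (LINT t:{0..<\<epsilon>}|lborel. (1::complex))"
    by simp
  also have "\<dots> = complex_of_real \<epsilon>" using assms by (subst set_integral_const) (auto simp: scaleR_conv_of_real)
  finally show ?thesis unfolding E_can_def by simp
qed

lemma cos_integral: fixes \<epsilon> k :: real assumes "\<epsilon> > 0" "k \<noteq> 0"
  shows "(LINT t:{0..<\<epsilon>}|lborel. cos (k * t)) = sin (k * \<epsilon>) / k"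
proof -
  have "(LINT t:{0..<\<epsilon>}|lborel. cos (k * t)) = (LBINT t=ereal 0..ereal \<epsilon>. cos (k * t))"
    using assms by (intro interval_integral_Ico[symmetric]) auto
  also have "\<dots> = sin (k * \<epsilon>) / k - sin (k * 0) / k"
    using assms
    by (intro interval_integral_FTC_finite)
       (auto intro!: continuous_intros derivative_eq_intros
             simp: has_real_derivative_iff_has_vector_derivative[symmetric] has_field_derivative_at_within)
  finally show ?thesis by simp
qed

lemma Ecan_offsum: assumes "\<epsilon> > 0" "m \<noteq> n"
  shows "Re (E_can {0..<\<epsilon>} m n + E_can {0..<\<epsilon>} n m) = sin ((real m - real n) * \<epsilon>) / (pi * (real m - real n))"
proof -
  define k where "k = real m - real n"
  have k: "k \<noteq> 0" using assms k_def by auto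
  have int: "set_integrable lborel {0..<\<epsilon>} (\<lambda>t. cis (c * t))" for c
    by (rule set_integrable_subset[OF borel_integrable_atLeastAtMost'[of 0 \<epsilon>]]) (auto intro!: continuous_intros)
  have "E_can {0..<\<epsilon>} m n + E_can {0..<\<epsilon>} n m
     = (1 / (2*pi)) * ((LINT t:{0..<\<epsilon>}|lborel. cis (k * t)) + (LINT t:{0..<\<epsilon>}|lborel. cis ((- k) * t)))"
    unfolding E_can_def k_def by (simp add: algebra_simps)
  also have "\<dots> = (1 / (2*pi)) * (LINT t:{0..<\<epsilon>}|lborel. cis (k * t) + cis ((- k) * t))"
    using set_integral_add(2)[OF int[of k] int[of "-k"]] by simp
  also have "(\<lambda>t. cis (k * t) + cis ((- k) * t)) = (\<lambda>t. complex_of_real (2 * cos (k * t)))"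
    by (auto intro!: complex_eqI)
  also have "(LINT t:{0..<\<epsilon>}|lborel. complex_of_real (2 * cos (k * t))) = complex_of_real (2 * (sin (k * \<epsilon>) / k))"
    using cos_integral[OF assms(1) k] by (simp add: set_integral_complex_of_real)
  finally show ?thesis unfolding k_def[symmetric] by simp
qed


lemma covD: "phase_covariant P \<Longrightarrow> X \<in> sets borel \<Longrightarrow> X \<subseteq> {0..} \<Longrightarrow> \<Theta> \<in> sets borel \<Longrightarrow> \<Theta> \<subseteq> {0..<2*pi} \<Longrightarrow>
   cis ((real m - real n) * \<theta>) * P (polar_set X \<Theta>) m n = P (polar_set X (shift2pi \<Theta> \<theta>)) m n"
  unfolding phase_covariant_def by blast

lemma arc_index: fixes \<epsilon> t :: real assumes "\<epsilon> > 0" "t \<ge> 0"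
  shows "t \<in> {real j * \<epsilon> ..< real (Suc j) * \<epsilon>} \<longleftrightarrow> j = nat \<lfloor>t / \<epsilon>\<rfloor>"
proof -
  have "t \<in> {real j * \<epsilon> ..< real (Suc j) * \<epsilon>} \<longleftrightarrow> real j \<le> t / \<epsilon> \<and> t / \<epsilon> < real j + 1"
    using assms by (auto simp: field_simps)
  also have "\<dots> \<longleftrightarrow> \<lfloor>t / \<epsilon>\<rfloor> = int j" by (simp add: floor_eq_iff)
  also have "\<dots> \<longleftrightarrow> j = nat \<lfloor>t / \<epsilon>\<rfloor>" using assms by auto
  finally show ?thesis .
qed

lemma sinc_bound: fixes x :: real assumes "x \<noteq> 0" shows "sin x / x \<ge> 1 - x\<^sup>2/6"
proof (cases "x > 0")
  case True
  then show ?thesis using sin_ge_cubic[of x] by (simp add: field_simps power2_eq_square power3_eq_cube)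
next
  case False
  then have "-x > 0" using assms by auto
  then have "sin (-x) / (-x) \<ge> 1 - (-x)\<^sup>2/6" using sin_ge_cubic[of "-x"] by (simp add: field_simps power2_eq_square power3_eq_cube)
  then show ?thesis by simp
qed

lemma alg_final: fixes d c :: real
  assumes h: "\<And>s t. s \<ge> 0 \<Longrightarrow> t \<ge> 0 \<Longrightarrow> (s\<^sup>2 - t\<^sup>2) * d \<le> (s - t)\<^sup>2 + s * t * c"
  shows "d\<^sup>2 \<le> c"
proof (cases "d \<ge> 0")
  case True
  have "((1+d)\<^sup>2 - 1\<^sup>2) * d \<le> ((1+d) - 1)\<^sup>2 + (1+d) * 1 * c" using h[of "1+d" 1] True by simp
  then have "(1+d) * d\<^sup>2 \<le> (1+d) * c" by (simp add: power2_eq_square algebra_simps)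
  then show ?thesis using True by (smt (verit) mult_le_cancel_left_pos)
next
  case False
  have "(1\<^sup>2 - (1-d)\<^sup>2) * d \<le> (1 - (1-d))\<^sup>2 + 1 * (1-d) * c" using h[of 1 "1-d"] False by simp
  then have "(1-d) * d\<^sup>2 \<le> (1-d) * c" by (simp add: power2_eq_square algebra_simps)
  then show ?thesis using False by (smt (verit) mult_le_cancel_left_pos)
qed


lemma key_ineq:
  fixes P :: "complex set \<Rightarrow> nat \<Rightarrow> nat \<Rightarrow> complex"
  assumes povm: "is_povm P" and cov: "phase_covariant P"
    and can: "\<forall>\<Theta>. \<Theta> \<in> sets borel \<longrightarrow> \<Theta> \<subseteq> {0..<2*pi} \<longrightarrow>
           (\<forall>m n. P (polar_set {0..} \<Theta>) m n = E_can \<Theta> m n)"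
    and X: "X \<in> sets borel" "X \<subseteq> {0<..}" and mn: "m \<noteq> n" and N: "N > (0::nat)"
  shows "(Re (P (polar_set X {0..<2*pi}) m m) - Re (P (polar_set X {0..<2*pi}) n n))\<^sup>2
           \<le> (2*pi*(real m - real n) / real N)\<^sup>2 / 3"
proof -
  define \<epsilon> where "\<epsilon> = 2*pi / real N"
  have \<epsilon>: "\<epsilon> > 0" using N by (simp add: \<epsilon>_def)
  have Ne: "real N * \<epsilon> = 2*pi" using N by (simp add: \<epsilon>_def)
  define \<Theta> where "\<Theta> j = {real j * \<epsilon> ..< real (Suc j) * \<epsilon>}" for j
  have X0: "X \<subseteq> {0..}" using X by auto
  have \<Theta>sub: "\<Theta> j \<subseteq> {0..<2*pi}" if "j < N" for j
  proof -
    have "real (Suc j) * \<epsilon> \<le> real N * \<epsilon>" using that \<epsilon> by (intro mult_right_mono) auto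
    then show ?thesis using \<epsilon> Ne by (auto simp: \<Theta>_def)
  qed
  have \<Theta>ne: "\<Theta> j \<noteq> {}" for j using \<epsilon> by (auto simp: \<Theta>_def)
  have \<Theta>b: "\<Theta> j \<in> sets borel" for j by (simp add: \<Theta>_def)
  have \<Theta>0: "\<Theta> 0 = {0..<\<epsilon>}" by (simp add: \<Theta>_def)
  have pX: "polar_set X (\<Theta> j) = {z. cmod z \<in> X \<and> Arg2pi z \<in> \<Theta> j}" if "j < N" for j
    using polar_char[OF X0 \<Theta>sub[OF that] \<Theta>ne] X(2) by auto
  have pXfull: "polar_set X {0..<2*pi} = {z. cmod z \<in> X \<and> Arg2pi z \<in> {0..<2*pi}}"
    using polar_char[OF X0, of "{0..<2*pi}"] X(2) pi_gt_zero by auto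
  have Arg_idx: "Arg2pi z \<in> \<Theta> j \<longleftrightarrow> j = nat \<lfloor>Arg2pi z / \<epsilon>\<rfloor>" for z j
    unfolding \<Theta>_def using arc_index[OF \<epsilon>, of "Arg2pi z" j] Arg2pi[of z] by auto
  have idx_lt: "nat \<lfloor>Arg2pi z / \<epsilon>\<rfloor> < N" for z
  proof -
    have "Arg2pi z \<in> \<Theta> (nat \<lfloor>Arg2pi z / \<epsilon>\<rfloor>)" using Arg_idx by simp
    then have "real (nat \<lfloor>Arg2pi z / \<epsilon>\<rfloor>) * \<epsilon> < 2*pi" using Arg2pi[of z] by (auto simp: \<Theta>_def)
    then have "real (nat \<lfloor>Arg2pi z / \<epsilon>\<rfloor>) * \<epsilon> < real N * \<epsilon>" using Ne by simp
    then show ?thesis using \<epsilon> by (simp add: mult_less_cancel_right)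
  qed
  have union: "polar_set X {0..<2*pi} = (\<Union>j<N. polar_set X (\<Theta> j))"
  proof -
    have "Arg2pi z \<in> {0..<2*pi} \<longleftrightarrow> (\<exists>j<N. Arg2pi z \<in> \<Theta> j)" for z
      using Arg_idx idx_lt Arg2pi[of z] by auto
    then show ?thesis unfolding pXfull using pX by auto
  qed
  have disj: "disjoint_family_on (\<lambda>j. polar_set X (\<Theta> j)) {..<N}"
    unfolding disjoint_family_on_def using pX Arg_idx by auto
  have pXb: "polar_set X (\<Theta> j) \<in> sets borel" if "j < N" for j
    using polar_borel[OF X(1) X0 \<Theta>b \<Theta>sub[OF that]] .
  have shift: "shift2pi (\<Theta> 0) (real j * \<epsilon>) = \<Theta> j" if "j < N" for j
  proof -
    have "\<epsilon> + real j * \<epsilon> \<le> 2*pi" using \<Theta>sub[OF that] \<Theta>ne[of j] by (force simp: \<Theta>_def algebra_simps)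
    then show ?thesis unfolding \<Theta>0 using shift2pi_arc[of 0 "real j * \<epsilon>" \<epsilon>] \<epsilon>
      by (simp add: \<Theta>_def algebra_simps)
  qed
  have same: "P (polar_set X (\<Theta> j)) i i = P (polar_set X (\<Theta> 0)) i i" if "j < N" for i j
    using covD[OF cov X(1) X0 \<Theta>b \<Theta>sub[OF N], of i i "real j * \<epsilon>"] shift[OF that] by simp
  have diag: "P (polar_set X {0..<2*pi}) i i = of_nat N * P (polar_set X (\<Theta> 0)) i i" for i
  proof -
    have "P (polar_set X {0..<2*pi}) i i = (\<Sum>j<N. P (polar_set X (\<Theta> j)) i i)"
      unfolding union by (rule povm_finite[OF povm pXb disj])
    also have "\<dots> = (\<Sum>j<N. P (polar_set X (\<Theta> 0)) i i)"
      by (intro sum.cong refl) (rule same, simp)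
    finally show ?thesis by simp
  qed
  define A where "A = P (polar_set X (\<Theta> 0))"
  define Y where "Y = {0::real..} - X"
  have Yb: "Y \<in> sets borel" "Y \<subseteq> {0..}" using X by (auto simp: Y_def)
  define B where "B = P (polar_set Y (\<Theta> 0))"
  have AB: "E_can {0..<\<epsilon>} i j = A i j + B i j" for i j
  proof -
    have "polar_set {0..} (\<Theta> 0) = polar_set X (\<Theta> 0) \<union> polar_set Y (\<Theta> 0)"
      unfolding polar_char[OF order_refl \<Theta>sub[OF N] \<Theta>ne] polar_char[OF X0 \<Theta>sub[OF N] \<Theta>ne]
        polar_char[OF Yb(2) \<Theta>sub[OF N] \<Theta>ne] by (auto simp: Y_def)
    moreover have "polar_set X (\<Theta> 0) \<inter> polar_set Y (\<Theta> 0) = {}"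
      unfolding polar_char[OF X0 \<Theta>sub[OF N] \<Theta>ne] polar_char[OF Yb(2) \<Theta>sub[OF N] \<Theta>ne] by (auto simp: Y_def)
    ultimately have "P (polar_set {0..} (\<Theta> 0)) i j = A i j + B i j"
      unfolding A_def B_def using povm_union[OF povm polar_borel[OF X(1) X0 \<Theta>b \<Theta>sub[OF N]]
          polar_borel[OF Yb(1) Yb(2) \<Theta>b \<Theta>sub[OF N]]] by simp
    then show ?thesis using can \<Theta>b \<Theta>sub[OF N] \<Theta>0 by auto
  qed
  define d where "d = Re (P (polar_set X {0..<2*pi}) m m) - Re (P (polar_set X {0..<2*pi}) n n)"
  define k where "k = real m - real n"
  have k: "k \<noteq> 0" using mn by (simp add: k_def)
  define x where "x = k * \<epsilon>"
  have x: "x \<noteq> 0" using k \<epsilon> by (simp add: x_def)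
  have Nrho: "real N * (sin x / (pi * k)) = 2 * (sin x / x)"
    using Ne k \<epsilon> pi_gt_zero unfolding x_def by (simp add: field_simps)
  have main: "(s\<^sup>2 - t\<^sup>2) * d \<le> (s - t)\<^sup>2 + s * t * (x\<^sup>2 / 3)" if st: "s \<ge> 0" "t \<ge> 0" for s t
  proof -
    have pA: "0 \<le> t\<^sup>2 * Re (A m m) + t * (-s) * Re (A m n + A n m) + (-s)\<^sup>2 * Re (A n n)"
      unfolding A_def by (rule povm_pos2[OF povm polar_borel[OF X(1) X0 \<Theta>b \<Theta>sub[OF N]] mn])
    have pB: "0 \<le> s\<^sup>2 * Re (B m m) + s * (-t) * Re (B m n + B n m) + (-t)\<^sup>2 * Re (B n n)"
      unfolding B_def by (rule povm_pos2[OF povm polar_borel[OF Yb(1) Yb(2) \<Theta>b \<Theta>sub[OF N]] mn])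
    have Ed: "Re (A i i) + Re (B i i) = \<epsilon> / (2*pi)" for i
      using AB[of i i] Ecan_diag[OF \<epsilon>, of i] by (metis plus_complex.sel(1) Re_complex_of_real)
    have Eo: "Re (A m n + A n m) + Re (B m n + B n m) = sin x / (pi * k)"
      using AB[of m n] AB[of n m] Ecan_offsum[OF \<epsilon> mn] unfolding x_def k_def
      by (simp add: algebra_simps)
    have Aii: "Re (A i i) = Re (P (polar_set X {0..<2*pi}) i i) / real N" for i
      using diag[of i] N unfolding A_def by simp
    have ineq: "(s\<^sup>2 - t\<^sup>2) * (Re (A m m) - Re (A n n)) \<le> (s\<^sup>2 + t\<^sup>2) * (\<epsilon> / (2*pi)) - s * t * (sin x / (pi * k))"
    proof -
      define a where "a = Re (A m m)"
      define b where "b = Re (A n n)"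
      define r where "r = Re (A m n + A n m)"
      define e where "e = \<epsilon> / (2*pi)"
      define \<rho> where "\<rho> = sin x / (pi * k)"
      have pB': "0 \<le> s\<^sup>2 * (e - a) + s * (-t) * (\<rho> - r) + (-t)\<^sup>2 * (e - b)"
        using pB Ed[of m] Ed[of n] Eo unfolding a_def b_def r_def e_def \<rho>_def
        by (smt (verit))
      have pA': "0 \<le> t\<^sup>2 * a + t * (-s) * r + (-s)\<^sup>2 * b" using pA unfolding a_def b_def r_def .
      have "(s\<^sup>2 + t\<^sup>2) * e - s * t * \<rho> - (s\<^sup>2 - t\<^sup>2) * (a - b)
          = (t\<^sup>2 * a + t * (-s) * r + (-s)\<^sup>2 * b) + (s\<^sup>2 * (e - a) + s * (-t) * (\<rho> - r) + (-t)\<^sup>2 * (e - b))"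
        by (simp add: power2_eq_square algebra_simps)
      then show ?thesis using pA' pB' unfolding a_def b_def e_def \<rho>_def by linarith
    qed
    have "Re (A m m) - Re (A n n) = d / real N" unfolding d_def using Aii by (simp add: diff_divide_distrib)
    moreover have "\<epsilon> / (2*pi) = 1 / real N" using N by (simp add: \<epsilon>_def)
    ultimately have "(s\<^sup>2 - t\<^sup>2) * (d / real N) \<le> (s\<^sup>2 + t\<^sup>2) * (1 / real N) - s * t * (sin x / (pi * k))"
      using ineq by simp
    then have "real N * ((s\<^sup>2 - t\<^sup>2) * (d / real N)) \<le> real N * ((s\<^sup>2 + t\<^sup>2) * (1 / real N) - s * t * (sin x / (pi * k)))"
      using N by (intro mult_left_mono) auto
    then have "(s\<^sup>2 - t\<^sup>2) * d \<le> (s\<^sup>2 + t\<^sup>2) - s * t * (real N * (sin x / (pi * k)))"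
      using N by (simp add: algebra_simps)
    also have "\<dots> = (s\<^sup>2 + t\<^sup>2) - s * t * (2 * (sin x / x))" by (simp only: Nrho)
    also have "\<dots> \<le> (s\<^sup>2 + t\<^sup>2) - s * t * (2 * (1 - x\<^sup>2/6))"
      using sinc_bound[OF x] st by (intro diff_left_mono mult_left_mono) auto
    also have "\<dots> = (s - t)\<^sup>2 + s * t * (x\<^sup>2 / 3)" by (simp add: power2_eq_square algebra_simps)
    finally show ?thesis .
  qed
  have "d\<^sup>2 \<le> x\<^sup>2 / 3" by (rule alg_final) (use main in auto)
  moreover have "x = 2*pi*(real m - real n) / real N" unfolding x_def k_def \<epsilon>_def by simp
  ultimately show ?thesis unfolding d_def by simp
qed


lemma pfull: "X \<subseteq> {0..} \<Longrightarrow> polar_set X {0..<2*pi} = {z. cmod z \<in> X}"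
  using polar_char[of X "{0..<2*pi}"] Arg2pi pi_gt_zero by auto

lemma sa_restrict: "sigma_algebra (space M) (sets M)"
  by (rule sets.sigma_algebra_axioms)

lemma offdiag:
  assumes cov: "phase_covariant P" and X: "X \<in> sets borel" "X \<subseteq> {0..}" and mn: "m \<noteq> n"
  shows "P (polar_set X {0..<2*pi}) m n = 0"
proof -
  define k where "k = real m - real n"
  have k: "k \<noteq> 0" using mn by (simp add: k_def)
  have e: "cis ((real m - real n) * (pi / k)) = -1" using k unfolding k_def[symmetric] by simp
  have "cis ((real m - real n) * (pi / k)) * P (polar_set X {0..<2*pi}) m n = P (polar_set X {0..<2*pi}) m n"
    using covD[OF cov X, of "{0..<2*pi}" m n "pi / k"] by (simp only: shift2pi_full) simp
  then have "- P (polar_set X {0..<2*pi}) m n = P (polar_set X {0..<2*pi}) m n" unfolding e by simp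
  then show ?thesis by simp
qed

lemma diag_pos:
  fixes P :: "complex set \<Rightarrow> nat \<Rightarrow> nat \<Rightarrow> complex"
  assumes povm: "is_povm P" and cov: "phase_covariant P"
    and can: "\<forall>\<Theta>. \<Theta> \<in> sets borel \<longrightarrow> \<Theta> \<subseteq> {0..<2*pi} \<longrightarrow>
           (\<forall>m n. P (polar_set {0..} \<Theta>) m n = E_can \<Theta> m n)"
    and X: "X \<in> sets borel" "X \<subseteq> {0<..}"
  shows "P (polar_set X {0..<2*pi}) m m = P (polar_set X {0..<2*pi}) n n"
proof (cases "m = n")
  case False
  define d where "d = Re (P (polar_set X {0..<2*pi}) m m) - Re (P (polar_set X {0..<2*pi}) n n)"
  define C where "C = (2*pi*(real m - real n))\<^sup>2 / 3"
  have X0: "X \<subseteq> {0..}" using X by auto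
  have b: "d\<^sup>2 \<le> C / (real N)\<^sup>2" if "N > 0" for N
    using key_ineq[OF povm cov can X False that] unfolding d_def C_def by (simp add: power_divide)
  have "d = 0"
  proof (rule ccontr)
    assume "d \<noteq> 0"
    then have dp: "d\<^sup>2 > 0" by simp
    obtain N :: nat where N: "real N > C / d\<^sup>2 + 1" using reals_Archimedean2 by blast
    have C0: "C \<ge> 0" by (simp add: C_def)
    have "C / d\<^sup>2 \<ge> 0" using C0 dp by simp
    then have N0: "N > 0" using N by linarith
    have "C / d\<^sup>2 < real N" using N by linarith
    then have "C < real N * d\<^sup>2" using dp by (simp add: pos_divide_less_eq)
    then have lt: "C / real N < d\<^sup>2" using N0 by (simp add: pos_divide_less_eq mult.commute)
    have "C / (real N)\<^sup>2 \<le> C / real N"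
      using N0 C0 by (intro divide_left_mono) (auto simp: power2_eq_square)
    also have "\<dots> < d\<^sup>2" by (rule lt)
    finally show False using b[OF N0] by simp
  qed
  moreover have "Im (P (polar_set X {0..<2*pi}) i i) = 0" for i
    using povm_diag(1)[OF povm polar_borel[OF X(1) X0, of "{0..<2*pi}"]] by auto
  ultimately show ?thesis unfolding d_def by (intro complex_eqI) auto
qed simp


lemma diag_const:
  fixes P :: "complex set \<Rightarrow> nat \<Rightarrow> nat \<Rightarrow> complex"
  assumes povm: "is_povm P" and cov: "phase_covariant P"
    and can: "\<forall>\<Theta>. \<Theta> \<in> sets borel \<longrightarrow> \<Theta> \<subseteq> {0..<2*pi} \<longrightarrow>
           (\<forall>m n. P (polar_set {0..} \<Theta>) m n = E_can \<Theta> m n)"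
    and X: "X \<in> sets borel" "X \<subseteq> {0..}"
  shows "P (polar_set X {0..<2*pi}) m m = P (polar_set X {0..<2*pi}) 0 0"
proof (cases "0 \<in> X")
  case False
  have "X \<subseteq> {0<..}"
  proof
    fix x assume "x \<in> X"
    then have "x \<ge> 0" "x \<noteq> 0" using X False by auto
    then show "x \<in> {0<..}" by simp
  qed
  then show ?thesis using diag_pos[OF povm cov can X(1)] by blast
next
  case True
  define Y where "Y = {0::real..} - X"
  have Y: "Y \<in> sets borel" "Y \<subseteq> {0<..}" using X True by (auto simp: Y_def less_le)
  have Y0: "Y \<subseteq> {0..}" using Y by auto
  have un: "polar_set X {0..<2*pi} \<union> polar_set Y {0..<2*pi} = UNIV"
    unfolding pfull[OF X(2)] pfull[OF Y0] by (auto simp: Y_def)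
  have dj: "polar_set X {0..<2*pi} \<inter> polar_set Y {0..<2*pi} = {}"
    unfolding pfull[OF X(2)] pfull[OF Y0] by (auto simp: Y_def)
  have "P (polar_set X {0..<2*pi}) i i + P (polar_set Y {0..<2*pi}) i i = 1" for i
  proof -
    have "P UNIV i i = 1" using povm unfolding is_povm_def by simp
    then show ?thesis
      using povm_union[OF povm polar_borel[OF X(1) X(2), of "{0..<2*pi}"] polar_borel[OF Y(1) Y0, of "{0..<2*pi}"] dj]
      unfolding un by simp
  qed
  moreover have "P (polar_set Y {0..<2*pi}) m m = P (polar_set Y {0..<2*pi}) 0 0"
    using diag_pos[OF povm cov can Y] by blast
  ultimately show ?thesis by (metis add_right_cancel add.commute)
qed

theorem mainTheorem6:
  fixes P :: "complex set \<Rightarrow> nat \<Rightarrow> nat \<Rightarrow> complex"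
  assumes "is_povm P"
    and "phase_covariant P"
    and "\<forall>\<Theta>. \<Theta> \<in> sets borel \<longrightarrow> \<Theta> \<subseteq> {0..<2*pi} \<longrightarrow>
           (\<forall>m n. P (polar_set {0..} \<Theta>) m n = E_can \<Theta> m n)"
  shows "\<exists>\<nu> :: real measure. prob_space \<nu> \<and> space \<nu> = {0..} \<and>
           sets \<nu> = sets (restrict_space borel {0..}) \<and>
           (\<forall>X. X \<in> sets borel \<longrightarrow> X \<subseteq> {0..} \<longrightarrow>
              (\<forall>m n. P (polar_set X {0..<2*pi}) m n =
                     (if m = n then complex_of_real (measure \<nu> X) else 0)))"
proof -
  note povm = assms(1) and cov = assms(2) and can = assms(3)
  define f where "f X = Re (P (polar_set X {0..<2*pi}) 0 0)" for X
  define M where "M = restrict_space borel {0::real..}"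
  have spM: "space M = {0..}" by (simp add: M_def space_restrict_space)
  have setsM: "X \<in> sets M \<longleftrightarrow> X \<subseteq> {0..} \<and> X \<in> sets borel" for X
    unfolding M_def by (subst sets_restrict_space_iff) auto
  have fpos: "f X \<ge> 0" if "X \<in> sets M" for X
    using povm_diag(2)[OF povm polar_borel[of X "{0..<2*pi}"]] that setsM unfolding f_def by auto
  define \<mu> where "\<mu> X = ennreal (f X)" for X
  define \<nu> where "\<nu> = measure_of (space M) (sets M) \<mu>"
  have sa: "sigma_algebra (space M) (sets M)" by (rule sa_restrict)
  have pos: "positive (sets M) \<mu>"
  proof -
    have "polar_set {} {0..<2*pi} = {}" by (simp add: polar_set_def)
    then show ?thesis unfolding positive_def \<mu>_def f_def using povm_empty[OF povm] by simp
  qed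
  have ca: "countably_additive (sets M) \<mu>"
    unfolding countably_additive_def
  proof (intro allI impI)
    fix A :: "nat \<Rightarrow> real set"
    assume A: "range A \<subseteq> sets M" "disjoint_family A" "\<Union> (range A) \<in> sets M"
    have Ai: "A i \<subseteq> {0..}" "A i \<in> sets borel" for i using A(1) setsM by auto
    have U: "\<Union> (range A) \<subseteq> {0..}" using Ai by auto
    define B where "B i = polar_set (A i) {0..<2*pi}" for i
    have "(\<lambda>k. P (B k) 0 0) sums P (\<Union>k. B k) 0 0"
    proof (rule povm_sums[OF povm])
      show "range B \<subseteq> sets borel" using polar_borel Ai by (auto simp: B_def)
      show "disjoint_family B" using A(2) unfolding B_def pfull[OF Ai(1)] disjoint_family_on_def by auto
    qed
    moreover have "(\<Union>k. B k) = polar_set (\<Union> (range A)) {0..<2*pi}"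
      unfolding B_def pfull[OF Ai(1)] pfull[OF U] by auto
    ultimately have "(\<lambda>k. f (A k)) sums f (\<Union> (range A))"
      unfolding f_def B_def using sums_Re by fastforce
    moreover have "f (A k) \<ge> 0" for k using fpos A(1) by auto
    ultimately show "(\<Sum>i. \<mu> (A i)) = \<mu> (\<Union> (range A))"
      unfolding \<mu>_def by (subst suminf_ennreal2) (auto simp: sums_iff)
  qed
  have em: "emeasure \<nu> X = \<mu> X" if "X \<in> sets M" for X
    unfolding \<nu>_def by (rule emeasure_measure_of_sigma[OF sa pos ca that])
  have sp: "space \<nu> = {0..}" unfolding \<nu>_def using sigma_algebra.space_measure_of_eq[OF sa] spM by simp
  have st: "sets \<nu> = sets M" unfolding \<nu>_def using sigma_algebra.sets_measure_of_eq[OF sa] by simp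
  have full: "polar_set {0..} {0..<2*pi} = UNIV" unfolding pfull[OF order_refl] by auto
  have "f {0..} = 1" unfolding f_def full using povm unfolding is_povm_def by simp
  then have "emeasure \<nu> (space \<nu>) = 1" using em[of "{0..}"] setsM sp by (simp add: \<mu>_def)
  then have prob: "prob_space \<nu>" by (rule prob_spaceI)
  have meas: "measure \<nu> X = f X" if "X \<in> sets M" for X
    using em[OF that] fpos[OF that] by (simp add: measure_def \<mu>_def)
  show ?thesis
  proof (intro exI conjI allI impI)
    show "prob_space \<nu>" by (rule prob)
    show "space \<nu> = {0..}" by (rule sp)
    show "sets \<nu> = sets (restrict_space borel {0..})" using st by (simp add: M_def)
    fix X :: "real set" and m n assume X: "X \<in> sets borel" "X \<subseteq> {0..}"
    have XM: "X \<in> sets M" using X setsM by auto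
    show "P (polar_set X {0..<2*pi}) m n = (if m = n then complex_of_real (measure \<nu> X) else 0)"
    proof (cases "m = n")
      case True
      have "Im (P (polar_set X {0..<2*pi}) 0 0) = 0"
        using povm_diag(1)[OF povm polar_borel[OF X, of "{0..<2*pi}"]] by auto
      then have "P (polar_set X {0..<2*pi}) 0 0 = complex_of_real (f X)"
        unfolding f_def by (intro complex_eqI) auto
      then show ?thesis using True diag_const[OF povm cov can X, of m] meas[OF XM] by simp
    next
      case False
      then show ?thesis using offdiag[OF cov X False] by simp
    qed
  qed
qed

end
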